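(* Let $G$ be a finite simple graph of order $n(G)$ that is neither edgeless nor complete, and let $\overline{G}$ be its complement. Then ${\rm vs}_{\chi}(G) + {\rm vs}_{\chi}(\overline{G}) \leq n(G) + 1$.
   Context: The chromatic vertex stability number ${\rm vs}_{\chi}(G)$ of a graph $G$ with at least one edge is the minimum number of vertices of $G$ whose deletion results in a graph $H$ with $\chi(H) = \chi(G)-1$, where $\chi$ denotes the chromatic number. *)

theory Defs
  imports Main
begin

text \<open>A finite simple graph is given by a finite vertex set V and a symmetric,
irreflexive adjacency relation E; only pairs of vertices of V matter.\<close>

definition simple_graph :: "'a set \<Rightarrow> ('a \<Rightarrow> 'a \<Rightarrow> bool) \<Rightarrow> bool" where
  "simple_graph V E \<longleftrightarrow> finite V \<and> (\<forall>u\<in>V. \<forall>v\<in>V. E u v \<longrightarrow> E v u) \<and> (\<forall>v\<in>V. \<not> E v v)"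

definition has_edge :: "'a set \<Rightarrow> ('a \<Rightarrow> 'a \<Rightarrow> bool) \<Rightarrow> bool" where
  "has_edge V E \<longleftrightarrow> (\<exists>u\<in>V. \<exists>v\<in>V. E u v)"

definition complete_graph :: "'a set \<Rightarrow> ('a \<Rightarrow> 'a \<Rightarrow> bool) \<Rightarrow> bool" where
  "complete_graph V E \<longleftrightarrow> (\<forall>u\<in>V. \<forall>v\<in>V. u \<noteq> v \<longrightarrow> E u v)"

definition complement :: "('a \<Rightarrow> 'a \<Rightarrow> bool) \<Rightarrow> 'a \<Rightarrow> 'a \<Rightarrow> bool" where
  "complement E u v \<longleftrightarrow> u \<noteq> v \<and> \<not> E u v"

definition proper_colouring :: "'a set \<Rightarrow> ('a \<Rightarrow> 'a \<Rightarrow> bool) \<Rightarrow> nat \<Rightarrow> ('a \<Rightarrow> nat) \<Rightarrow> bool" where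
  "proper_colouring V E k c \<longleftrightarrow> (\<forall>v\<in>V. c v < k) \<and> (\<forall>u\<in>V. \<forall>v\<in>V. E u v \<longrightarrow> c u \<noteq> c v)"

definition chromatic_number :: "'a set \<Rightarrow> ('a \<Rightarrow> 'a \<Rightarrow> bool) \<Rightarrow> nat" where
  "chromatic_number V E = (LEAST k. \<exists>c. proper_colouring V E k c)"

text \<open>Chromatic vertex stability number: minimum number of vertices whose deletion
(taking the induced subgraph on the remaining vertices) lowers the chromatic number by one.\<close>
definition vs_chi :: "'a set \<Rightarrow> ('a \<Rightarrow> 'a \<Rightarrow> bool) \<Rightarrow> nat" where
  "vs_chi V E = (LEAST s. \<exists>S. S \<subseteq> V \<and> card S = s \<and>
                     chromatic_number (V - S) E = chromatic_number V E - 1)"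

end

theory Submission
  imports Defs
begin

lemma chrom_le: "proper_colouring W E m d \<Longrightarrow> chromatic_number W E \<le> m"
  unfolding chromatic_number_def by (rule Least_le) blast

lemma chrom_ex:
  assumes "finite W" "\<forall>v\<in>W. \<not> E v v"
  shows "\<exists>c. proper_colouring W E (chromatic_number W E) c"
proof -
  obtain h where h: "bij_betw h W {0..<card W}" using ex_bij_betw_finite_nat[OF assms(1)] by blast
  have "proper_colouring W E (card W) h"
    unfolding proper_colouring_def using h assms(2)
    by (auto simp: bij_betw_def inj_on_def)
  then have "\<exists>k c. proper_colouring W E k c" by blast
  then show ?thesis unfolding chromatic_number_def by (rule LeastI_ex)
qed

lemma remove_class:
  assumes fin: "finite V" and irr: "\<forall>v\<in>V. \<not> E v v"
    and c: "proper_colouring V E k c" and k: "k = chromatic_number V E" and i: "i < k"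
  shows "chromatic_number (V - {v\<in>V. c v = i}) E = k - 1"
proof (rule antisym)
  let ?C = "{v\<in>V. c v = i}"
  define d where "d v = (if c v > i then c v - 1 else c v)" for v
  have "proper_colouring (V - ?C) E (k - 1) d"
    unfolding proper_colouring_def
  proof (intro conjI ballI impI)
    fix v assume "v \<in> V - ?C"
    then have "c v < k" "c v \<noteq> i" using c unfolding proper_colouring_def by auto
    then show "d v < k - 1" unfolding d_def using i by auto
  next
    fix u v assume "u \<in> V - ?C" "v \<in> V - ?C" "E u v"
    then have "c u \<noteq> c v" "c u \<noteq> i" "c v \<noteq> i" using c unfolding proper_colouring_def by auto
    then show "d u \<noteq> d v" unfolding d_def by auto
  qed
  then show "chromatic_number (V - ?C) E \<le> k - 1" by (rule chrom_le)
next
  let ?C = "{v\<in>V. c v = i}"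
  let ?m = "chromatic_number (V - ?C) E"
  obtain e where e: "proper_colouring (V - ?C) E ?m e"
    using chrom_ex[of "V - ?C" E] fin irr by auto
  define f where "f v = (if c v = i then ?m else e v)" for v
  have "proper_colouring V E (?m + 1) f"
    unfolding proper_colouring_def
  proof (intro conjI ballI impI)
    fix v assume "v \<in> V"
    have "v \<in> V - ?C \<Longrightarrow> e v < ?m" using e unfolding proper_colouring_def by blast
    then show "f v < ?m + 1" using \<open>v \<in> V\<close> unfolding f_def by fastforce
  next
    fix u v assume uv: "u \<in> V" "v \<in> V" "E u v"
    then have "c u \<noteq> c v" using c unfolding proper_colouring_def by auto
    have eb: "\<And>w. w \<in> V - ?C \<Longrightarrow> e w < ?m" using e unfolding proper_colouring_def by blast
    have ep: "u \<in> V - ?C \<Longrightarrow> v \<in> V - ?C \<Longrightarrow> e u \<noteq> e v"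
      using e uv unfolding proper_colouring_def by blast
    show "f u \<noteq> f v" unfolding f_def
      using \<open>c u \<noteq> c v\<close> uv eb[of u] eb[of v] ep by (auto split: if_splits)
  qed
  then have "k \<le> ?m + 1" using k chrom_le by blast
  then show "k - 1 \<le> ?m" by simp
qed

lemma half_bound:
  assumes sg: "simple_graph V E" and he: "has_edge V E"
  shows "2 * vs_chi V E \<le> card V"
proof -
  have fin: "finite V" and irr: "\<forall>v\<in>V. \<not> E v v" using sg unfolding simple_graph_def by auto
  define k where "k = chromatic_number V E"
  obtain c where c: "proper_colouring V E k c" using chrom_ex[of V E, OF fin irr] k_def by auto
  have k2: "k \<ge> 2"
  proof (rule ccontr)
    assume "\<not> k \<ge> 2"
    then have "\<forall>v\<in>V. c v = 0" using c unfolding proper_colouring_def by auto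
    then show False using he c unfolding has_edge_def proper_colouring_def by auto
  qed
  define C0 where "C0 = {v\<in>V. c v = 0}"
  define C1 where "C1 = {v\<in>V. c v = 1}"
  have "C0 \<inter> C1 = {}" "C0 \<union> C1 \<subseteq> V" unfolding C0_def C1_def by auto
  then have sum: "card C0 + card C1 \<le> card V"
    using fin by (metis card_Un_disjoint card_mono finite_subset le_supE)
  have vs: "vs_chi V E \<le> card {v\<in>V. c v = i}" if "i < k" for i
  proof -
    have "chromatic_number (V - {v\<in>V. c v = i}) E = chromatic_number V E - 1"
      using remove_class[OF fin irr c k_def that] k_def by simp
    then show ?thesis unfolding vs_chi_def
      by (intro Least_le) (rule exI[of _ "{v\<in>V. c v = i}"], auto)
  qed
  have "vs_chi V E \<le> card C0" "vs_chi V E \<le> card C1"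
    using vs[of 0] vs[of 1] k2 unfolding C0_def C1_def by auto
  then show ?thesis using sum by linarith
qed

theorem proposition5:
  fixes V :: "'a set" and E :: "'a \<Rightarrow> 'a \<Rightarrow> bool"
  assumes "simple_graph V E"
    and "has_edge V E"
    and "\<not> complete_graph V E"
  shows "vs_chi V E + vs_chi V (complement E) \<le> card V + 1"
proof -
  have "simple_graph V (complement E)"
    using assms(1) unfolding simple_graph_def complement_def by auto
  moreover have "has_edge V (complement E)"
    using assms(3) unfolding has_edge_def complete_graph_def complement_def by auto
  ultimately have "2 * vs_chi V (complement E) \<le> card V" by (rule half_bound)
  moreover have "2 * vs_chi V E \<le> card V" using assms(1,2) by (rule half_bound)
  ultimately show ?thesis by linarith
qed

end
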